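(* Let $\pi$ be a probability measure on $\overline G$ with $\pi(\partial G)=0$ such that $\int_{\overline G}\mathcal Lf\,d\pi\le0$ for every $f$ with $-f\in\mathcal H$. Given $n\in\mathbb N$ and $f_i\in\mathcal H$, $i=1,\dots,n$, for each concave function $\psi\in\mathcal C^2(\mathbb R^n)$ that is monotone increasing in each variable separately, and any $\lambda>0$, $$\int_{\overline G}\psi(f_1(y),\dots,f_n(y))\,d\pi(y)\ \ge\ \int_{\overline G}\psi\big(f_1(y)-\lambda\mathcal Lf_1(y),\dots,f_n(y)-\lambda\mathcal Lf_n(y)\big)\,d\pi(y).$$
   Context: $G\subset\mathbb R^J$ is a nonempty connected domain; $d(\cdot)$ is a set-valued map on $\overline G$ with $d(x)$ a nonempty closed convex cone with vertex $0$ for $x\in\partial G$, $d(x)=\{0\}$ in the interior, closed graph; $\mathcal V\subset\partial G$. $b:\mathbb R^J\to\mathbb R^J$ and $\sigma:\mathbb R^J\to\mathbb R^{J\times N}$ are continuous, $a=\sigma\sigma^T$, $\mathcal Lf(x)=\sum_ib_i(x)\partial_{x_i}f(x)+\frac12\sum_{i,j}a_{ij}(x)\partial^2_{x_ix_j}f(x)$. $\mathcal C^2_c(\overline G)$: restrictions to $\overline G$ of functions $\mathcal C^2$ on every open neighbourhood of $\overline G$, with compact support; $\mathcal C^2_c(\overline G)\oplus\mathbb R$: sums of such a function and a constant. $\mathcal H=\{f\in\mathcal C^2_c(\overline G)\oplus\mathbb R: f$ is constant on some open neighbourhood of each point of $\mathcal V$, and $\langle d,\nabla f(y)\rangle\le0$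 for all $d\in d(y)$, $y\in\partial G\}$. *)

theory Defs
  imports "HOL-Analysis.Analysis" "HOL-Probability.Probability"
begin

definition partial :: "'n::finite \<Rightarrow> (real^'n \<Rightarrow> real) \<Rightarrow> real^'n \<Rightarrow> real" where
  "partial i f x = deriv (\<lambda>t. f (x + t *\<^sub>R axis i 1)) 0"

definition grad :: "(real^'n::finite \<Rightarrow> real) \<Rightarrow> real^'n \<Rightarrow> real^'n" where
  "grad f x = (\<chi> i. partial i f x)"

definition C2_on :: "(real^'n::finite) set \<Rightarrow> (real^'n \<Rightarrow> real) \<Rightarrow> bool" where
  "C2_on U f \<longleftrightarrow> f differentiable_on U \<and> (\<forall>i. partial i f differentiable_on U)
      \<and> (\<forall>i j. continuous_on U (partial i (partial j f)))"

definition gen ::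
  "(real^'j::finite \<Rightarrow> real^'j) \<Rightarrow> (real^'j \<Rightarrow> real^'m::finite^'j) \<Rightarrow> (real^'j \<Rightarrow> real) \<Rightarrow> real^'j \<Rightarrow> real" where
  "gen b \<sigma> f x = (\<Sum>i\<in>UNIV. b x $ i * partial i f x)
     + 1/2 * (\<Sum>i\<in>UNIV. \<Sum>j\<in>UNIV. ((\<sigma> x ** transpose (\<sigma> x)) $ i $ j) * partial i (partial j f) x)"

text \<open>Elements of C^2_c(closure G) (+) R, represented by a C^2 extension to an open
  neighbourhood of closure G: f = g + c on that neighbourhood, g C^2 with
  compact support in closure G.\<close>
definition C2c_plus_const :: "(real^'j::finite) set \<Rightarrow> (real^'j \<Rightarrow> real) \<Rightarrow> bool" where
  "C2c_plus_const G f \<longleftrightarrow> (\<exists>U c. open U \<and> closure G \<subseteq> U \<and> C2_on U f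
      \<and> compact (closure {x \<in> closure G. f x \<noteq> c}))"

definition Hclass ::
  "(real^'j::finite) set \<Rightarrow> (real^'j \<Rightarrow> (real^'j) set) \<Rightarrow> (real^'j) set \<Rightarrow> (real^'j \<Rightarrow> real) set" where
  "Hclass G d V = {f. C2c_plus_const G f
      \<and> (\<forall>v\<in>V. \<exists>W. open W \<and> v \<in> W \<and> (\<exists>c. \<forall>x\<in>W \<inter> closure G. f x = c))
      \<and> (\<forall>y\<in>frontier G. \<forall>e\<in>d y. e \<bullet> grad f y \<le> 0)}"

end

theory Submission
  imports Defs
begin


lemma partial_eq:
  assumes "(f has_derivative f') (at x)"
  shows "partial i f x = f' (axis i 1)"
proof -
  have lin: "linear f'" using assms has_derivative_linear by blast
  have d1: "((\<lambda>t::real. x + t *\<^sub>R axis i 1) has_derivative (\<lambda>t. t *\<^sub>R axis i 1)) (at 0)"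
    by (auto intro!: derivative_eq_intros)
  have a: "(f has_derivative f') (at (x + (0::real) *\<^sub>R axis i 1))" using assms by simp
  have "((\<lambda>t. f (x + t *\<^sub>R axis i 1)) has_derivative (\<lambda>t. f' (t *\<^sub>R axis i 1))) (at 0)"
    using has_derivative_compose[OF d1 a] .
  moreover have "(\<lambda>t. f' (t *\<^sub>R axis i 1)) = (*) (f' (axis i 1))"
    using linear_scale[OF lin] by (auto simp: mult.commute)
  ultimately have "((\<lambda>t. f (x + t *\<^sub>R axis i 1)) has_field_derivative f' (axis i 1)) (at 0)"
    unfolding has_field_derivative_def by simp
  thus ?thesis unfolding partial_def by (rule DERIV_imp_deriv)
qed

lemma partial_local:
  assumes "open S" "x \<in> S" "\<And>y. y \<in> S \<Longrightarrow> f y = g y"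
  shows "partial i f x = partial i g x"
  unfolding partial_def
proof (rule deriv_cong_ev[OF _ refl])
  let ?T = "(\<lambda>t::real. x + t *\<^sub>R axis i 1) -` S"
  have "open ?T" by (rule open_vimage[OF assms(1)]) (intro continuous_intros)
  moreover have "0 \<in> ?T" using assms by simp
  ultimately show "\<forall>\<^sub>F t in nhds 0. f (x + t *\<^sub>R axis i 1) = g (x + t *\<^sub>R axis i 1)"
    unfolding eventually_nhds using assms(3) by blast
qed

lemma vec_lambda_sum: "(\<chi> k. h k) = (\<Sum>k\<in>UNIV. h k *\<^sub>R axis k (1::real))"
proof -
  have "(\<Sum>x\<in>UNIV. h x * (if i = x then 1 else 0)) = (\<Sum>x\<in>UNIV. if i = x then h x else 0)" for i :: 'a
    by (rule sum.cong) auto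
  then show ?thesis by (simp add: vec_eq_iff axis_def)
qed

lemma deriv_repr:
  assumes "(f has_derivative f') (at x)"
  shows "f' v = (\<Sum>i\<in>UNIV. v $ i * partial i f x)"
proof -
  have lin: "linear f'" using assms has_derivative_linear by blast
  have "f' v = f' (\<Sum>i\<in>UNIV. v $ i *\<^sub>R axis i (1::real))"
    using vec_lambda_sum[of "\<lambda>i. v $ i"] by simp
  also have "\<dots> = (\<Sum>i\<in>UNIV. v $ i * f' (axis i 1))"
    by (simp add: linear_sum[OF lin] linear_scale[OF lin])
  finally show ?thesis using partial_eq[OF assms] by simp
qed

lemma partial_const: "partial i (\<lambda>y. c) x = 0"
  using partial_eq[of "\<lambda>y. c" "\<lambda>_. 0" x i] by simp

lemma partial_neg:
  assumes "h differentiable at x"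
  shows "partial i (\<lambda>y. - h y) x = - partial i h x"
proof -
  obtain D where D: "(h has_derivative D) (at x)" using assms differentiable_def by blast
  have "((\<lambda>y. - h y) has_derivative (\<lambda>v. - D v)) (at x)" using D by (intro derivative_intros)
  then show ?thesis using partial_eq[OF D] partial_eq by metis
qed

lemma partial_sum:
  assumes "finite A" "\<And>k. k \<in> A \<Longrightarrow> h k differentiable at x"
  shows "partial i (\<lambda>y. \<Sum>k\<in>A. h k y) x = (\<Sum>k\<in>A. partial i (h k) x)"
proof -
  obtain D where D: "\<And>k. k \<in> A \<Longrightarrow> (h k has_derivative D k) (at x)"
    using assms(2) unfolding differentiable_def by metis
  have "((\<lambda>y. \<Sum>k\<in>A. h k y) has_derivative (\<lambda>v. \<Sum>k\<in>A. D k v)) (at x)"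
    using D by (intro has_derivative_sum) auto
  then have "partial i (\<lambda>y. \<Sum>k\<in>A. h k y) x = (\<Sum>k\<in>A. D k (axis i 1))" by (rule partial_eq)
  also have "\<dots> = (\<Sum>k\<in>A. partial i (h k) x)" by (intro sum.cong refl) (simp add: partial_eq[OF D])
  finally show ?thesis .
qed

lemma partial_mult:
  assumes "f differentiable at x" "g differentiable at x"
  shows "partial i (\<lambda>y. f y * g y) x = partial i f x * g x + f x * partial i g x"
proof -
  obtain D where D: "(f has_derivative D) (at x)" using assms differentiable_def by blast
  obtain E where E: "(g has_derivative E) (at x)" using assms differentiable_def by blast
  have "((\<lambda>y. f y * g y) has_derivative (\<lambda>v. f x * E v + D v * g x)) (at x)"
    using D E by (intro has_derivative_mult)
  then show ?thesis using partial_eq[OF D] partial_eq[OF E] partial_eq by (metis add.commute)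
qed

lemma F_deriv:
  fixes fs :: "'k::finite \<Rightarrow> 'a::real_normed_vector \<Rightarrow> real"
  assumes "\<And>k. (fs k has_derivative D k) (at x)"
  shows "((\<lambda>y. \<chi> k. fs k y) has_derivative (\<lambda>v. \<chi> k. D k v)) (at x)"
proof -
  have "((\<lambda>y. \<Sum>k\<in>UNIV. fs k y *\<^sub>R axis k (1::real)) has_derivative (\<lambda>v. \<Sum>k\<in>UNIV. D k v *\<^sub>R axis k (1::real))) (at x)"
    using assms by (intro has_derivative_sum has_derivative_scaleR_left) auto
  then show ?thesis by (subst (1 2) vec_lambda_sum) 
qed

lemma F_differentiable:
  fixes fs :: "'k::finite \<Rightarrow> 'a::real_normed_vector \<Rightarrow> real"
  assumes "\<And>k. fs k differentiable (at x)"
  shows "(\<lambda>y. \<chi> k. fs k y) differentiable (at x)"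
proof -
  obtain D where "\<And>k. (fs k has_derivative D k) (at x)" using assms unfolding differentiable_def by metis
  then show ?thesis using F_deriv differentiable_def by blast
qed

lemma partial_chain:
  fixes fs :: "'k::finite \<Rightarrow> real^'j::finite \<Rightarrow> real" and \<phi> :: "real^'k \<Rightarrow> real"
  assumes "\<And>k. fs k differentiable (at x)" "\<phi> differentiable (at (\<chi> k. fs k x))"
  shows "partial i (\<lambda>y. \<phi> (\<chi> k. fs k y)) x = (\<Sum>k\<in>UNIV. partial i (fs k) x * partial k \<phi> (\<chi> k. fs k x))"
proof -
  obtain D where D: "\<And>k. (fs k has_derivative D k) (at x)" using assms unfolding differentiable_def by metis
  obtain P where P: "(\<phi> has_derivative P) (at (\<chi> k. fs k x))" using assms differentiable_def by blast
  have "((\<lambda>y. \<phi> (\<chi> k. fs k y)) has_derivative (\<lambda>v. P (\<chi> k. D k v))) (at x)"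
    using has_derivative_compose[OF F_deriv[OF D] P] .
  then have "partial i (\<lambda>y. \<phi> (\<chi> k. fs k y)) x = P (\<chi> k. D k (axis i 1))" by (rule partial_eq)
  also have "\<dots> = (\<Sum>k\<in>UNIV. D k (axis i 1) * partial k \<phi> (\<chi> k. fs k x))"
    by (simp add: deriv_repr[OF P])
  finally show ?thesis using partial_eq[OF D] by simp
qed

lemma concave_tangent:
  fixes \<psi> :: "'a::real_normed_vector \<Rightarrow> real"
  assumes conc: "concave_on UNIV \<psi>" and P: "(\<psi> has_derivative P) (at x)"
  shows "\<psi> y \<le> \<psi> x + P (y - x)"
proof -
  let ?d = "y - x"
  have cvx: "convex_on UNIV (\<lambda>t::real. - \<psi> (x + t *\<^sub>R ?d))"
    unfolding convex_on_def
  proof (intro conjI ballI allI impI)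
    fix s t u v :: real assume uv: "0 \<le> u" "0 \<le> v" "u + v = 1"
    have e: "x + (u * s + v * t) *\<^sub>R ?d = u *\<^sub>R (x + s *\<^sub>R ?d) + v *\<^sub>R (x + t *\<^sub>R ?d)"
    proof -
      have "x = (u + v) *\<^sub>R x" using uv by simp
      then show ?thesis by (simp add: algebra_simps)
    qed
    show "- \<psi> (x + (u *\<^sub>R s + v *\<^sub>R t) *\<^sub>R ?d) \<le> u * - \<psi> (x + s *\<^sub>R ?d) + v * - \<psi> (x + t *\<^sub>R ?d)"
      using conc uv unfolding concave_on_def convex_on_def by (simp add: e)
  qed simp
  have d1: "((\<lambda>t::real. x + t *\<^sub>R ?d) has_derivative (\<lambda>t. t *\<^sub>R ?d)) (at 0)"
    by (auto intro!: derivative_eq_intros)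
  have a: "(\<psi> has_derivative P) (at (x + (0::real) *\<^sub>R ?d))" using P by simp
  have lin: "linear P" using P has_derivative_linear by blast
  have "((\<lambda>t. \<psi> (x + t *\<^sub>R ?d)) has_derivative (\<lambda>t. P (t *\<^sub>R ?d))) (at 0)"
    using has_derivative_compose[OF d1 a] .
  then have "((\<lambda>t. - \<psi> (x + t *\<^sub>R ?d)) has_derivative (\<lambda>t. - P (t *\<^sub>R ?d))) (at 0)"
    by (intro derivative_intros)
  moreover have "(\<lambda>t. - P (t *\<^sub>R ?d)) = (*) (- P ?d)"
    using linear_scale[OF lin] by (auto simp: mult.commute)
  ultimately have "((\<lambda>t. - \<psi> (x + t *\<^sub>R ?d)) has_field_derivative (- P ?d)) (at 0 within UNIV)"
    unfolding has_field_derivative_def by simp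
  from convex_on_imp_above_tangent[OF cvx connected_UNIV _ _ this, of 1]
  show ?thesis by simp
qed

lemma mono_partial_nonneg:
  fixes \<psi> :: "real^'k::finite \<Rightarrow> real"
  assumes mono: "\<And>x i t. t \<ge> 0 \<Longrightarrow> \<psi> x \<le> \<psi> (x + t *\<^sub>R axis i 1)"
    and d: "\<psi> differentiable at z"
  shows "partial k \<psi> z \<ge> 0"
proof (rule ccontr)
  assume neg: "\<not> partial k \<psi> z \<ge> 0"
  obtain P where P: "(\<psi> has_derivative P) (at z)" using d differentiable_def by blast
  have lin: "linear P" using P has_derivative_linear by blast
  have d1: "((\<lambda>t::real. z + t *\<^sub>R axis k 1) has_derivative (\<lambda>t. t *\<^sub>R axis k 1)) (at 0)"
    by (auto intro!: derivative_eq_intros)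
  have a: "(\<psi> has_derivative P) (at (z + (0::real) *\<^sub>R axis k 1))" using P by simp
  have "((\<lambda>t. \<psi> (z + t *\<^sub>R axis k 1)) has_derivative (\<lambda>t. P (t *\<^sub>R axis k 1))) (at 0)"
    using has_derivative_compose[OF d1 a] .
  moreover have "(\<lambda>t. P (t *\<^sub>R axis k 1)) = (*) (P (axis k 1))"
    using linear_scale[OF lin] by (auto simp: mult.commute)
  ultimately have D: "((\<lambda>t. \<psi> (z + t *\<^sub>R axis k 1)) has_field_derivative P (axis k 1)) (at 0)"
    unfolding has_field_derivative_def by simp
  have "P (axis k 1) < 0" using neg partial_eq[OF P] by simp
  from DERIV_neg_dec_right[OF D this] obtain e where e: "e > 0"
    "\<And>h. h > 0 \<Longrightarrow> h < e \<Longrightarrow> \<psi> (z + (0 + h) *\<^sub>R axis k 1) < \<psi> (z + 0 *\<^sub>R axis k 1)"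
    by blast
  have "\<psi> (z + (e/2) *\<^sub>R axis k 1) < \<psi> z" using e(2)[of "e/2"] e(1) by simp
  moreover have "\<psi> z \<le> \<psi> (z + (e/2) *\<^sub>R axis k 1)" using mono e(1) by simp
  ultimately show False by simp
qed

lemma concave_hess:
  fixes \<psi> :: "real^'k::finite \<Rightarrow> real"
  assumes conc: "concave_on UNIV \<psi>" and d: "\<And>z. \<psi> differentiable at z"
    and dd: "\<And>k. partial k \<psi> differentiable at x"
  shows "(\<Sum>k\<in>UNIV. \<Sum>l\<in>UNIV. w $ l * w $ k * partial l (partial k \<psi>) x) \<le> 0"
proof (rule ccontr)
  define Q where "Q = (\<Sum>k\<in>UNIV. \<Sum>l\<in>UNIV. w $ l * w $ k * partial l (partial k \<psi>) x)"
  assume "\<not> (\<Sum>k\<in>UNIV. \<Sum>l\<in>UNIV. w $ l * w $ k * partial l (partial k \<psi>) x) \<le> 0"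
  then have Qpos: "Q > 0" unfolding Q_def by simp
  define g where "g t = (\<Sum>k\<in>UNIV. w $ k * partial k \<psi> (x + t *\<^sub>R w))" for t :: real
  obtain D where D: "\<And>k. (partial k \<psi> has_derivative D k) (at x)"
    using dd unfolding differentiable_def by metis
  have d1: "((\<lambda>t::real. x + t *\<^sub>R w) has_derivative (\<lambda>t. t *\<^sub>R w)) (at 0)"
    by (auto intro!: derivative_eq_intros)
  have a: "\<And>k. (partial k \<psi> has_derivative D k) (at (x + (0::real) *\<^sub>R w))" using D by simp
  have "\<And>k. ((\<lambda>t. partial k \<psi> (x + t *\<^sub>R w)) has_derivative (\<lambda>t. D k (t *\<^sub>R w))) (at 0)"
    using has_derivative_compose[OF d1 a] .
  then have "(g has_derivative (\<lambda>t. \<Sum>k\<in>UNIV. w $ k * D k (t *\<^sub>R w))) (at 0)"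
    unfolding g_def by (intro derivative_intros) auto
  moreover have "(\<lambda>t. \<Sum>k\<in>UNIV. w $ k * D k (t *\<^sub>R w)) = (*) Q"
  proof
    fix t :: real
    have lin: "\<And>k. linear (D k)" using D has_derivative_linear by blast
    have "(\<Sum>k\<in>UNIV. w $ k * D k (t *\<^sub>R w)) = t * (\<Sum>k\<in>UNIV. w $ k * D k w)"
      by (simp add: linear_scale[OF lin] sum_distrib_left algebra_simps)
    also have "(\<Sum>k\<in>UNIV. w $ k * D k w) = Q"
      unfolding Q_def by (intro sum.cong refl) (simp add: deriv_repr[OF D] sum_distrib_left algebra_simps)
    finally show "(\<Sum>k\<in>UNIV. w $ k * D k (t *\<^sub>R w)) = Q * t" by simp
  qed
  ultimately have G: "(g has_field_derivative Q) (at 0)" unfolding has_field_derivative_def by simp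
  have key: "t * (g t - g 0) \<le> 0" for t
  proof -
    let ?z = "x + t *\<^sub>R w"
    obtain Px where Px: "(\<psi> has_derivative Px) (at x)" using d differentiable_def by blast
    obtain Pz where Pz: "(\<psi> has_derivative Pz) (at ?z)" using d differentiable_def by blast
    have "\<psi> ?z \<le> \<psi> x + Px (?z - x)" by (rule concave_tangent[OF conc Px])
    moreover have "\<psi> x \<le> \<psi> ?z + Pz (x - ?z)" by (rule concave_tangent[OF conc Pz])
    moreover have "Px (?z - x) = t * g 0" unfolding g_def
      by (simp add: deriv_repr[OF Px] sum_distrib_left algebra_simps)
    moreover have "Pz (x - ?z) = - t * g t" unfolding g_def
      by (simp add: deriv_repr[OF Pz] sum_distrib_left algebra_simps sum_negf)
    ultimately show ?thesis by (simp add: algebra_simps)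
  qed
  from DERIV_pos_inc_right[OF G Qpos] obtain e where e: "e > 0"
    "\<And>h. h > 0 \<Longrightarrow> h < e \<Longrightarrow> g 0 < g (0 + h)" by blast
  have "g 0 < g (e/2)" using e by simp
  moreover have "(e/2) * (g (e/2) - g 0) \<le> 0" by (rule key)
  moreover have "0 < (e/2) * (g (e/2) - g 0)" using e(1) calculation(1) by (intro mult_pos_pos) auto
  ultimately show False by linarith
qed



lemma sum_rot3: "(\<Sum>a\<in>A. \<Sum>b\<in>B. \<Sum>c\<in>C. f a b c) = (\<Sum>b\<in>B. \<Sum>c\<in>C. \<Sum>a\<in>A. f a b c)"
proof -
  have "(\<Sum>a\<in>A. \<Sum>b\<in>B. \<Sum>c\<in>C. f a b c) = (\<Sum>b\<in>B. \<Sum>a\<in>A. \<Sum>c\<in>C. f a b c)" by (rule sum.swap)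
  also have "\<dots> = (\<Sum>b\<in>B. \<Sum>c\<in>C. \<Sum>a\<in>A. f a b c)" by (rule sum.cong[OF refl], rule sum.swap)
  finally show ?thesis .
qed

lemma alg_id:
  fixes B :: "'j::finite \<Rightarrow> real" and S :: "'j \<Rightarrow> 'm::finite \<Rightarrow> real" and Df :: "'j \<Rightarrow> 'k::finite \<Rightarrow> real"
    and DDf :: "'j \<Rightarrow> 'j \<Rightarrow> 'k \<Rightarrow> real" and p :: "'k \<Rightarrow> real" and H :: "'k \<Rightarrow> 'k \<Rightarrow> real"
  shows "(\<Sum>i\<in>UNIV. B i * (\<Sum>k\<in>UNIV. Df i k * p k)) + 1/2 * (\<Sum>i\<in>UNIV. \<Sum>j\<in>UNIV. (\<Sum>m\<in>UNIV. S i m * S j m) * (\<Sum>k\<in>UNIV. DDf i j k * p k + Df j k * (\<Sum>l\<in>UNIV. Df i l * H l k)))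
   = (\<Sum>k\<in>UNIV. p k * ((\<Sum>i\<in>UNIV. B i * Df i k) + 1/2 * (\<Sum>i\<in>UNIV. \<Sum>j\<in>UNIV. (\<Sum>m\<in>UNIV. S i m * S j m) * DDf i j k)))
     + 1/2 * (\<Sum>m\<in>UNIV. \<Sum>k\<in>UNIV. \<Sum>l\<in>UNIV. (\<Sum>i\<in>UNIV. S i m * Df i l) * (\<Sum>j\<in>UNIV. S j m * Df j k) * H l k)"
proof -
  have e1: "(\<Sum>i\<in>UNIV. B i * (\<Sum>k\<in>UNIV. Df i k * p k)) = (\<Sum>k\<in>UNIV. p k * (\<Sum>i\<in>UNIV. B i * Df i k))"
  proof -
    have "(\<Sum>i\<in>UNIV. B i * (\<Sum>k\<in>UNIV. Df i k * p k)) = (\<Sum>i\<in>UNIV. \<Sum>k\<in>UNIV. p k * (B i * Df i k))"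
      by (simp add: sum_distrib_left mult_ac)
    also have "\<dots> = (\<Sum>k\<in>UNIV. p k * (\<Sum>i\<in>UNIV. B i * Df i k))"
      by (subst sum.swap) (simp add: sum_distrib_left)
    finally show ?thesis .
  qed
  have e2g: "(\<Sum>i\<in>UNIV. \<Sum>j\<in>UNIV. A i j * (\<Sum>k\<in>UNIV. DDf i j k * p k))
     = (\<Sum>k\<in>UNIV. p k * (\<Sum>i\<in>UNIV. \<Sum>j\<in>UNIV. A i j * DDf i j k))" for A :: "'j \<Rightarrow> 'j \<Rightarrow> real"
  proof -
    have "(\<Sum>i\<in>UNIV. \<Sum>j\<in>UNIV. A i j * (\<Sum>k\<in>UNIV. DDf i j k * p k))
      = (\<Sum>i\<in>UNIV. \<Sum>j\<in>UNIV. \<Sum>k\<in>UNIV. p k * (A i j * DDf i j k))"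
      by (simp add: sum_distrib_left mult_ac)
    also have "\<dots> = (\<Sum>i\<in>UNIV. \<Sum>k\<in>UNIV. \<Sum>j\<in>UNIV. p k * (A i j * DDf i j k))"
      by (rule sum.cong[OF refl]) (rule sum.swap)
    also have "\<dots> = (\<Sum>k\<in>UNIV. \<Sum>i\<in>UNIV. \<Sum>j\<in>UNIV. p k * (A i j * DDf i j k))"
      by (rule sum.swap)
    also have "\<dots> = (\<Sum>k\<in>UNIV. p k * (\<Sum>i\<in>UNIV. \<Sum>j\<in>UNIV. A i j * DDf i j k))"
      by (simp add: sum_distrib_left)
    finally show ?thesis .
  qed
  note e2 = e2g[of "\<lambda>i j. \<Sum>m\<in>UNIV. S i m * S j m"]
  have e3: "(\<Sum>i\<in>UNIV. \<Sum>j\<in>UNIV. (\<Sum>m\<in>UNIV. S i m * S j m) * (\<Sum>k\<in>UNIV. Df j k * (\<Sum>l\<in>UNIV. Df i l * H l k)))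
     = (\<Sum>m\<in>UNIV. \<Sum>k\<in>UNIV. \<Sum>l\<in>UNIV. (\<Sum>i\<in>UNIV. S i m * Df i l) * (\<Sum>j\<in>UNIV. S j m * Df j k) * H l k)"
  proof -
    have "(\<Sum>m\<in>UNIV. \<Sum>k\<in>UNIV. \<Sum>l\<in>UNIV. (\<Sum>i\<in>UNIV. S i m * Df i l) * (\<Sum>j\<in>UNIV. S j m * Df j k) * H l k)
      = (\<Sum>m\<in>UNIV. \<Sum>k\<in>UNIV. \<Sum>l\<in>UNIV. \<Sum>i\<in>UNIV. \<Sum>j\<in>UNIV. S i m * S j m * (Df j k * (Df i l * H l k)))"
      by (simp add: sum_distrib_left sum_distrib_right mult_ac)
    also have "\<dots> = (\<Sum>m\<in>UNIV. \<Sum>k\<in>UNIV. \<Sum>i\<in>UNIV. \<Sum>j\<in>UNIV. \<Sum>l\<in>UNIV. S i m * S j m * (Df j k * (Df i l * H l k)))"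
      by (rule sum.cong[OF refl], rule sum.cong[OF refl], rule sum_rot3)
    also have "\<dots> = (\<Sum>m\<in>UNIV. \<Sum>i\<in>UNIV. \<Sum>j\<in>UNIV. \<Sum>k\<in>UNIV. \<Sum>l\<in>UNIV. S i m * S j m * (Df j k * (Df i l * H l k)))"
      by (rule sum.cong[OF refl], rule sum_rot3)
    also have "\<dots> = (\<Sum>i\<in>UNIV. \<Sum>j\<in>UNIV. \<Sum>m\<in>UNIV. \<Sum>k\<in>UNIV. \<Sum>l\<in>UNIV. S i m * S j m * (Df j k * (Df i l * H l k)))"
      by (rule sum_rot3)
    also have "\<dots> = (\<Sum>i\<in>UNIV. \<Sum>j\<in>UNIV. \<Sum>m\<in>UNIV. (S i m * S j m) * (\<Sum>k\<in>UNIV. Df j k * (\<Sum>l\<in>UNIV. Df i l * H l k)))"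
      by (simp only: sum_distrib_left)
    also have "\<dots> = (\<Sum>i\<in>UNIV. \<Sum>j\<in>UNIV. (\<Sum>m\<in>UNIV. S i m * S j m) * (\<Sum>k\<in>UNIV. Df j k * (\<Sum>l\<in>UNIV. Df i l * H l k)))"
      by (simp only: sum_distrib_right)
    finally show ?thesis by simp
  qed
  have gsplit: "(\<Sum>k\<in>UNIV. p k * (X k + c * Y k)) = (\<Sum>k\<in>UNIV. p k * X k) + c * (\<Sum>k\<in>UNIV. p k * Y k)"
    for X Y :: "'k \<Rightarrow> real" and c :: real
    by (simp add: sum.distrib distrib_left sum_distrib_left mult_ac)
  have split: "(\<Sum>i\<in>UNIV. \<Sum>j\<in>UNIV. A i j * (\<Sum>k\<in>UNIV. DDf i j k * p k + Df j k * (\<Sum>l\<in>UNIV. Df i l * H l k)))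
    = (\<Sum>i\<in>UNIV. \<Sum>j\<in>UNIV. A i j * (\<Sum>k\<in>UNIV. DDf i j k * p k)) + (\<Sum>i\<in>UNIV. \<Sum>j\<in>UNIV. A i j * (\<Sum>k\<in>UNIV. Df j k * (\<Sum>l\<in>UNIV. Df i l * H l k)))"
    for A :: "'j \<Rightarrow> 'j \<Rightarrow> real"
    by (simp add: sum.distrib distrib_left)
  show ?thesis
    unfolding split gsplit e1 e2 e3 by (simp add: algebra_simps)
qed

lemma vanish:
  assumes Gopen: "open G" and U: "open U" "closure G \<subseteq> U" and C2: "C2_on U h"
    and x: "x \<in> closure G" "x \<notin> closure {y \<in> closure G. h y \<noteq> c}"
  shows "partial j h x = 0 \<and> partial i (partial j h) x = 0"
proof -
  let ?K = "closure {y \<in> closure G. h y \<noteq> c}"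
  let ?S = "G - ?K"
  have Sopen: "open ?S" using Gopen by (intro open_Diff) auto
  have hc: "h y = c" if y: "y \<in> ?S" for y
  proof (rule ccontr)
    assume "h y \<noteq> c"
    then have "y \<in> {y \<in> closure G. h y \<noteq> c}" using y closure_subset[of G] by auto
    then have "y \<in> ?K" by (rule closure_subset[THEN subsetD])
    then show False using y by simp
  qed
  have p0: "partial j h y = 0" if y: "y \<in> ?S" for y
  proof -
    have "partial j h y = partial j (\<lambda>_. c) y" by (rule partial_local[OF Sopen y]) (rule hc)
    then show ?thesis by (simp add: partial_const)
  qed
  have pp0: "partial i (partial j h) y = 0" if y: "y \<in> ?S" for y
  proof -
    have "partial i (partial j h) y = partial i (\<lambda>_. 0) y" by (rule partial_local[OF Sopen y]) (rule p0)
    then show ?thesis by (simp add: partial_const)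
  qed
  have "x \<in> (- ?K) \<inter> closure G" using x by auto
  also have "\<dots> \<subseteq> closure (- ?K \<inter> G)" by (rule open_Int_closure_subset) auto
  finally have xS: "x \<in> closure ?S" by (simp add: Diff_eq Int_commute)
  have sub: "closure ?S \<subseteq> U" using U closure_mono[of ?S G] by auto
  have c1: "continuous_on U (partial j h)"
    using C2 unfolding C2_on_def by (blast intro: differentiable_imp_continuous_on)
  have c2: "continuous_on U (partial i (partial j h))"
    using C2 unfolding C2_on_def by blast
  show ?thesis
    using continuous_constant_on_closure[OF continuous_on_subset[OF c1 sub] p0 xS]
      continuous_constant_on_closure[OF continuous_on_subset[OF c2 sub] pp0 xS] by blast
qed

lemma gen_vanish:
  assumes "open G" "open U" "closure G \<subseteq> U" "C2_on U h"
    "x \<in> closure G" "x \<notin> closure {y \<in> closure G. h y \<noteq> c}"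
  shows "gen b \<sigma> h x = 0"
  using vanish[OF assms] unfolding gen_def by simp

lemma gen_neg:
  assumes U: "open U" "x \<in> U" and d1: "h differentiable_on U" and d2: "\<And>j. partial j h differentiable_on U"
  shows "gen b \<sigma> (\<lambda>y. - h y) x = - gen b \<sigma> h x"
proof -
  have d: "\<And>y. y \<in> U \<Longrightarrow> h differentiable at y"
    using d1 U differentiable_on_eq_differentiable_at by blast
  have dd: "\<And>j y. y \<in> U \<Longrightarrow> partial j h differentiable at y"
    using d2 U differentiable_on_eq_differentiable_at by blast
  have p1: "\<And>j y. y \<in> U \<Longrightarrow> partial j (\<lambda>y. - h y) y = - partial j h y"
    using partial_neg d by blast
  have p2: "partial i (partial j (\<lambda>y. - h y)) x = - partial i (partial j h) x" for i j
  proof -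
    have "partial i (partial j (\<lambda>y. - h y)) x = partial i (\<lambda>y. - partial j h y) x"
      by (rule partial_local[OF U]) (simp add: p1)
    also have "\<dots> = - partial i (partial j h) x" by (rule partial_neg[OF dd[OF U(2)]])
    finally show ?thesis .
  qed
  show ?thesis unfolding gen_def by (simp add: p1[OF U(2)] p2 sum_negf algebra_simps)
qed

lemma cont_nth: "continuous_on U f \<Longrightarrow> continuous_on U (\<lambda>x. f x $ i)"
  by (rule continuous_on_component)

lemma gen_cont:
  fixes b :: "real^'j::finite \<Rightarrow> real^'j" and \<sigma> :: "real^'j \<Rightarrow> real^'m::finite^'j"
  assumes "open U" "C2_on U h" "continuous_on UNIV b" "continuous_on UNIV \<sigma>"
  shows "continuous_on U (gen b \<sigma> h)"
proof -
  have c1: "\<And>i. continuous_on U (partial i h)"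
    using assms(2) unfolding C2_on_def by (blast intro: differentiable_imp_continuous_on)
  have c2: "\<And>i j. continuous_on U (partial i (partial j h))" using assms(2) C2_on_def by blast
  have cb: "\<And>i. continuous_on U (\<lambda>x. b x $ i)"
    by (rule cont_nth, rule continuous_on_subset[OF assms(3)]) auto
  have cs: "\<And>i m. continuous_on U (\<lambda>x. \<sigma> x $ i $ m)"
    by (rule cont_nth, rule cont_nth, rule continuous_on_subset[OF assms(4)]) auto
  have ca: "\<And>i j. continuous_on U (\<lambda>x. (\<sigma> x ** transpose (\<sigma> x)) $ i $ j)"
    unfolding matrix_matrix_mult_def transpose_def by (simp, intro continuous_intros cs)
  show ?thesis unfolding gen_def[abs_def] by (intro continuous_intros c1 c2 cb ca)
qed

lemma integrable_cc:
  fixes h :: "'a::metric_space \<Rightarrow> real"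
  assumes "prob_space M" "sets M = sets (restrict_space borel C)" "space M = C" "closed C"
    "continuous_on C h" "compact K" "\<And>x. x \<in> C \<Longrightarrow> x \<notin> K \<Longrightarrow> h x = c"
  shows "integrable M h"
proof -
  interpret prob_space M by fact
  have "compact (K \<inter> C)" using assms(4,6) by blast
  moreover have "continuous_on (K \<inter> C) h" by (rule continuous_on_subset[OF assms(5)]) auto
  ultimately have "compact (h ` (K \<inter> C))" by (intro compact_continuous_image)
  then obtain B where B: "\<And>y. y \<in> h ` (K \<inter> C) \<Longrightarrow> norm y \<le> B"
    using compact_imp_bounded bounded_iff by metis
  have bnd: "norm (h x) \<le> max B (norm c)" if "x \<in> space M" for x
    using that assms(3,7) B[of "h x"] by (cases "x \<in> K") auto
  have meas: "h \<in> borel_measurable M"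
    by (subst measurable_cong_sets[OF assms(2) refl]) (rule borel_measurable_continuous_on_restrict[OF assms(5)])
  show ?thesis by (rule integrable_const_bound[where B="max B (norm c)"]) (use bnd meas in \<open>auto intro: AE_I2\<close>)
qed



theorem lemma5p1:
  fixes G :: "(real^'j) set"
    and d :: "real^'j \<Rightarrow> (real^'j) set"
    and V :: "(real^'j) set"
    and b :: "real^'j \<Rightarrow> real^'j"
    and \<sigma> :: "real^'j \<Rightarrow> real^'m^'j"
    and \<pi> :: "(real^'j) measure"
    and fs :: "'k::finite \<Rightarrow> real^'j \<Rightarrow> real"
    and \<psi> :: "real^'k \<Rightarrow> real"
    and lam :: real
  assumes G_open: "open G" and G_conn: "connected G" and G_ne: "G \<noteq> {}"
    and d_cone: "\<forall>x\<in>frontier G. d x \<noteq> {} \<and> closed (d x) \<and> convex (d x) \<and> cone (d x)"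
    and d_int: "\<forall>x\<in>G. d x = {0}"
    and d_graph: "closed {(x, v). x \<in> closure G \<and> v \<in> d x}"
    and V_sub: "V \<subseteq> frontier G"
    and b_cont: "continuous_on UNIV b" and \<sigma>_cont: "continuous_on UNIV \<sigma>"
    and \<pi>_prob: "prob_space \<pi>"
    and \<pi>_sets: "sets \<pi> = sets (restrict_space borel (closure G))"
    and \<pi>_space: "space \<pi> = closure G"
    and \<pi>_bd: "measure \<pi> (frontier G) = 0"
    and \<pi>_inv: "\<And>f. (\<lambda>x. - f x) \<in> Hclass G d V \<Longrightarrow> (\<integral>x. gen b \<sigma> f x \<partial>\<pi>) \<le> 0"
    and fs_H: "\<And>i. fs i \<in> Hclass G d V"
    and \<psi>_C2: "C2_on UNIV \<psi>"
    and \<psi>_concave: "concave_on UNIV \<psi>"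
    and \<psi>_mono: "\<And>x i t. t \<ge> 0 \<Longrightarrow> \<psi> x \<le> \<psi> (x + t *\<^sub>R axis i 1)"
    and lam_pos: "lam > 0"
  shows "(\<integral>y. \<psi> (\<chi> i. fs i y) \<partial>\<pi>)
           \<ge> (\<integral>y. \<psi> (\<chi> i. fs i y - lam * gen b \<sigma> (fs i) y) \<partial>\<pi>)"
proof -
  have C: "\<forall>k. \<exists>U c. open U \<and> closure G \<subseteq> U \<and> C2_on U (fs k) \<and> compact (closure {x \<in> closure G. fs k x \<noteq> c})"
    using fs_H unfolding Hclass_def C2c_plus_const_def by blast
  then obtain U c where U0: "\<forall>k. open (U k) \<and> closure G \<subseteq> U k \<and> C2_on (U k) (fs k)
      \<and> compact (closure {x \<in> closure G. fs k x \<noteq> c k})"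
  proof -
    from choice[OF C] obtain U where "\<forall>k. \<exists>c. open (U k) \<and> closure G \<subseteq> U k \<and> C2_on (U k) (fs k)
      \<and> compact (closure {x \<in> closure G. fs k x \<noteq> c})" by blast
    from choice[OF this] obtain c where "\<forall>k. open (U k) \<and> closure G \<subseteq> U k \<and> C2_on (U k) (fs k)
      \<and> compact (closure {x \<in> closure G. fs k x \<noteq> c k})" by blast
    then show ?thesis using that by blast
  qed
  then have U: "\<And>k. open (U k)" "\<And>k. closure G \<subseteq> U k" "\<And>k. C2_on (U k) (fs k)"
      "\<And>k. compact (closure {x \<in> closure G. fs k x \<noteq> c k})" by auto
  define U0 where "U0 = (\<Inter>k. U k)"
  have U0o: "open U0" unfolding U0_def using U(1) by (intro open_INT) auto
  have U0G: "closure G \<subseteq> U0" unfolding U0_def using U(2) by auto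
  have U0U: "\<And>k. U0 \<subseteq> U k" unfolding U0_def by auto
  have df: "fs k differentiable at y" if "y \<in> U0" for k y
    using U(3)[of k] U(1)[of k] U0U[of k] that unfolding C2_on_def
    by (meson differentiable_on_eq_differentiable_at subsetD)
  have ddf: "partial j (fs k) differentiable at y" if "y \<in> U0" for k j y
    using U(3)[of k] U(1)[of k] U0U[of k] that unfolding C2_on_def
    by (meson differentiable_on_eq_differentiable_at subsetD)
  have cf: "continuous_on U0 (fs k)" for k
    using U(3)[of k] U0U[of k] unfolding C2_on_def
    by (meson differentiable_imp_continuous_on continuous_on_subset)
  have cdf: "continuous_on U0 (partial j (fs k))" for k j
    using U(3)[of k] U0U[of k] unfolding C2_on_def
    by (meson differentiable_imp_continuous_on continuous_on_subset)
  have cddf: "continuous_on U0 (partial i (partial j (fs k)))" for k i j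
    using U(3)[of k] U0U[of k] unfolding C2_on_def
    by (meson continuous_on_subset)
  have dpsi: "\<psi> differentiable at z" for z
    using \<psi>_C2 unfolding C2_on_def differentiable_on_def by simp
  have ddpsi: "partial k \<psi> differentiable at z" for k z
    using \<psi>_C2 unfolding C2_on_def differentiable_on_def by simp
  have cpsi: "continuous_on UNIV \<psi>"
    using \<psi>_C2 unfolding C2_on_def by (blast intro: differentiable_imp_continuous_on)
  have cdpsi: "continuous_on UNIV (partial k \<psi>)" for k
    using \<psi>_C2 unfolding C2_on_def by (blast intro: differentiable_imp_continuous_on)
  have cddpsi: "continuous_on UNIV (partial l (partial k \<psi>))" for k l
    using \<psi>_C2 unfolding C2_on_def by blast
  define F where "F = (\<lambda>y. \<chi> k. fs k y)"
  define g where "g = (\<lambda>y. \<psi> (F y))"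
  have cF: "continuous_on U0 F"
    unfolding F_def by (intro continuous_on_vec_lambda cf)
  have dF: "F differentiable at y" if "y \<in> U0" for y
    unfolding F_def by (rule F_differentiable) (rule df[OF that])
  have pg: "partial j g y = (\<Sum>k\<in>UNIV. partial j (fs k) y * partial k \<psi> (F y))" if y: "y \<in> U0" for j y
    unfolding g_def F_def by (rule partial_chain) (use df[OF y] dpsi in auto)
  have dcomp: "(\<lambda>y. partial k \<psi> (F y)) differentiable at y" if y: "y \<in> U0" for k y
    using differentiable_chain_at[OF dF[OF y] ddpsi] by (simp add: o_def)
  have dP: "(\<lambda>y. \<Sum>k\<in>UNIV. partial j (fs k) y * partial k \<psi> (F y)) differentiable at y" if y: "y \<in> U0" for j y
    using ddf[OF y] dcomp[OF y] by (intro differentiable_sum differentiable_mult) auto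
  have ppg: "partial i (partial j g) x = (\<Sum>k\<in>UNIV. partial i (partial j (fs k)) x * partial k \<psi> (F x)
      + partial j (fs k) x * (\<Sum>l\<in>UNIV. partial i (fs l) x * partial l (partial k \<psi>) (F x)))"
    if x: "x \<in> U0" for i j x
  proof -
    have "partial i (partial j g) x = partial i (\<lambda>y. \<Sum>k\<in>UNIV. partial j (fs k) y * partial k \<psi> (F y)) x"
      by (rule partial_local[OF U0o x]) (rule pg)
    also have "\<dots> = (\<Sum>k\<in>UNIV. partial i (\<lambda>y. partial j (fs k) y * partial k \<psi> (F y)) x)"
      by (rule partial_sum) (use ddf[OF x] dcomp[OF x] in \<open>auto intro: differentiable_mult\<close>)
    also have "\<dots> = (\<Sum>k\<in>UNIV. partial i (partial j (fs k)) x * partial k \<psi> (F x)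
      + partial j (fs k) x * partial i (\<lambda>y. partial k \<psi> (F y)) x)"
      by (rule sum.cong[OF refl], rule partial_mult[OF ddf[OF x] dcomp[OF x]])
    also have "\<dots> = (\<Sum>k\<in>UNIV. partial i (partial j (fs k)) x * partial k \<psi> (F x)
      + partial j (fs k) x * (\<Sum>l\<in>UNIV. partial i (fs l) x * partial l (partial k \<psi>) (F x)))"
    proof (rule sum.cong[OF refl])
      fix k
      have "partial i (\<lambda>y. partial k \<psi> (F y)) x = (\<Sum>l\<in>UNIV. partial i (fs l) x * partial l (partial k \<psi>) (F x))"
        unfolding F_def by (rule partial_chain) (use df[OF x] ddpsi in auto)
      then show "partial i (partial j (fs k)) x * partial k \<psi> (F x) + partial j (fs k) x * partial i (\<lambda>y. partial k \<psi> (F y)) x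
        = partial i (partial j (fs k)) x * partial k \<psi> (F x) + partial j (fs k) x * (\<Sum>l\<in>UNIV. partial i (fs l) x * partial l (partial k \<psi>) (F x))"
        by simp
    qed
    finally show ?thesis .
  qed
  have C2g: "C2_on U0 g"
    unfolding C2_on_def
  proof (intro conjI allI)
    show "g differentiable_on U0"
      unfolding differentiable_on_eq_differentiable_at[OF U0o] g_def
      using differentiable_chain_at[OF dF dpsi] by (simp add: o_def)
    fix j
    show "partial j g differentiable_on U0"
      unfolding differentiable_on_eq_differentiable_at[OF U0o]
    proof
      fix x assume x: "x \<in> U0"
      obtain D where D: "((\<lambda>y. \<Sum>k\<in>UNIV. partial j (fs k) y * partial k \<psi> (F y)) has_derivative D) (at x)"
        using dP[OF x] differentiable_def by blast
      have "(partial j g has_derivative D) (at x)"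
        by (rule has_derivative_transform_within_open[OF D U0o x]) (simp add: pg)
      then show "partial j g differentiable at x" using differentiable_def by blast
    qed
  next
    fix i j
    have "continuous_on U0 (\<lambda>x. \<Sum>k\<in>UNIV. partial i (partial j (fs k)) x * partial k \<psi> (F x)
      + partial j (fs k) x * (\<Sum>l\<in>UNIV. partial i (fs l) x * partial l (partial k \<psi>) (F x)))"
      by (intro continuous_intros cddf cdf continuous_on_compose2[OF cdpsi cF]
           continuous_on_compose2[OF cddpsi cF]) auto
    then show "continuous_on U0 (partial i (partial j g))"
      by (rule continuous_on_eq) (simp add: ppg)
  qed
  define p where "p y k = partial k \<psi> (F y)" for y k
  define H where "H y l k = partial l (partial k \<psi>) (F y)" for y l k
  define w where "w y m = (\<chi> l. \<Sum>i\<in>UNIV. \<sigma> y $ i $ m * partial i (fs l) y)" for y m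
  have genid: "gen b \<sigma> g y = (\<Sum>k\<in>UNIV. p y k * gen b \<sigma> (fs k) y)
      + 1/2 * (\<Sum>m\<in>UNIV. \<Sum>k\<in>UNIV. \<Sum>l\<in>UNIV. w y m $ l * w y m $ k * H y l k)" if y: "y \<in> U0" for y
  proof -
    have a: "(\<sigma> y ** transpose (\<sigma> y)) $ i $ j = (\<Sum>m\<in>UNIV. \<sigma> y $ i $ m * \<sigma> y $ j $ m)" for i j
      by (simp add: matrix_matrix_mult_def transpose_def)
    show ?thesis
      unfolding gen_def pg[OF y] ppg[OF y] a p_def H_def w_def
      using alg_id[of "\<lambda>i. b y $ i" "\<lambda>i k. partial i (fs k) y" "\<lambda>k. partial k \<psi> (F y)"
          "\<lambda>i m. \<sigma> y $ i $ m" "\<lambda>i j k. partial i (partial j (fs k)) y" "\<lambda>l k. partial l (partial k \<psi>) (F y)"]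
      by simp
  qed
  have hess: "(\<Sum>m\<in>UNIV. \<Sum>k\<in>UNIV. \<Sum>l\<in>UNIV. w y m $ l * w y m $ k * H y l k) \<le> 0" for y
    unfolding H_def by (intro sum_nonpos concave_hess[OF \<psi>_concave dpsi ddpsi])
  have pnn: "p y k \<ge> 0" for y k
    unfolding p_def by (rule mono_partial_nonneg[OF \<psi>_mono dpsi])
  have genle: "gen b \<sigma> g y \<le> (\<Sum>k\<in>UNIV. p y k * gen b \<sigma> (fs k) y)" if y: "y \<in> U0" for y
    using genid[OF y] hess[of y] by simp
  have pw: "\<psi> (\<chi> i. fs i y - lam * gen b \<sigma> (fs i) y) \<le> \<psi> (F y) - lam * gen b \<sigma> g y" if y: "y \<in> U0" for y
  proof -
    obtain P where P: "(\<psi> has_derivative P) (at (F y))" using dpsi differentiable_def by blast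
    have "\<psi> (\<chi> i. fs i y - lam * gen b \<sigma> (fs i) y) \<le> \<psi> (F y) + P ((\<chi> i. fs i y - lam * gen b \<sigma> (fs i) y) - F y)"
      by (rule concave_tangent[OF \<psi>_concave P])
    also have "P ((\<chi> i. fs i y - lam * gen b \<sigma> (fs i) y) - F y) = - lam * (\<Sum>k\<in>UNIV. p y k * gen b \<sigma> (fs k) y)"
      unfolding deriv_repr[OF P] p_def F_def by (simp add: sum_distrib_left algebra_simps)
    also have "- lam * (\<Sum>k\<in>UNIV. p y k * gen b \<sigma> (fs k) y) \<le> - lam * gen b \<sigma> g y"
      using genle[OF y] lam_pos by simp
    finally show ?thesis by simp
  qed
  define c0 where "c0 = \<psi> (\<chi> k. c k)"
  define Kall where "Kall = (\<Union>k. closure {x \<in> closure G. fs k x \<noteq> c k})"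
  have Kall_c: "compact Kall" unfolding Kall_def using U(4) by (intro compact_UN) auto
  have outK: "fs k x = c k" if "x \<in> closure G" "x \<notin> Kall" for x k
  proof (rule ccontr)
    assume "fs k x \<noteq> c k"
    then have "x \<in> {x \<in> closure G. fs k x \<noteq> c k}" using that by simp
    then have "x \<in> closure {x \<in> closure G. fs k x \<noteq> c k}" by (rule closure_subset[THEN subsetD])
    then show False using that unfolding Kall_def by blast
  qed
  have Kg_sub: "closure {x \<in> closure G. g x \<noteq> c0} \<subseteq> Kall"
  proof -
    have "{x \<in> closure G. g x \<noteq> c0} \<subseteq> Kall"
    proof
      fix x assume x: "x \<in> {x \<in> closure G. g x \<noteq> c0}"
      show "x \<in> Kall"
      proof (rule ccontr)
        assume "x \<notin> Kall"
        then have "F x = (\<chi> k. c k)" using outK x unfolding F_def by (simp add: vec_eq_iff)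
        then show False using x unfolding g_def c0_def by simp
      qed
    qed
    moreover have "closed Kall" using Kall_c compact_imp_closed by blast
    ultimately show ?thesis by (rule closure_minimal)
  qed
  have Kg_c: "compact (closure {x \<in> closure G. g x \<noteq> c0})"
  proof -
    have "closure {x \<in> closure G. g x \<noteq> c0} = Kall \<inter> closure {x \<in> closure G. g x \<noteq> c0}"
      using Kg_sub by blast
    moreover have "compact (Kall \<inter> closure {x \<in> closure G. g x \<noteq> c0})"
      using Kall_c closed_closure by (rule compact_Int_closed)
    ultimately show ?thesis by simp
  qed
  have gH: "g \<in> Hclass G d V"
    unfolding Hclass_def mem_Collect_eq
  proof (intro conjI)
    show "C2c_plus_const G g"
      unfolding C2c_plus_const_def using U0o U0G C2g Kg_c by blast
    show "\<forall>v\<in>V. \<exists>W. open W \<and> v \<in> W \<and> (\<exists>c. \<forall>x\<in>W \<inter> closure G. g x = c)"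
    proof
      fix v assume v: "v \<in> V"
      have "\<forall>k. \<exists>W. open W \<and> v \<in> W \<and> (\<exists>c. \<forall>x\<in>W \<inter> closure G. fs k x = c)"
        using fs_H v unfolding Hclass_def by blast
      from choice[OF this] obtain W where W: "\<forall>k. open (W k) \<and> v \<in> W k \<and> (\<exists>c. \<forall>x\<in>W k \<inter> closure G. fs k x = c)"
        by blast
      then have "\<forall>k. \<exists>c. \<forall>x\<in>W k \<inter> closure G. fs k x = c" by blast
      from choice[OF this] obtain e where e: "\<forall>k. \<forall>x\<in>W k \<inter> closure G. fs k x = e k" by blast
      have "open (\<Inter>k. W k)" using W by (intro open_INT) auto
      moreover have "v \<in> (\<Inter>k. W k)" using W by auto
      moreover have "\<forall>x\<in>(\<Inter>k. W k) \<inter> closure G. g x = \<psi> (\<chi> k. e k)"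
        using e unfolding g_def F_def by (auto simp: vec_eq_iff)
      ultimately show "\<exists>W. open W \<and> v \<in> W \<and> (\<exists>c. \<forall>x\<in>W \<inter> closure G. g x = c)" by blast
    qed
    show "\<forall>y\<in>frontier G. \<forall>e\<in>d y. e \<bullet> grad g y \<le> 0"
    proof (intro ballI)
      fix y e assume y: "y \<in> frontier G" and e: "e \<in> d y"
      have yU: "y \<in> U0" using y U0G unfolding frontier_def by auto
      have "e \<bullet> grad g y = (\<Sum>i\<in>UNIV. e $ i * (\<Sum>k\<in>UNIV. partial i (fs k) y * p y k))"
        unfolding inner_vec_def grad_def p_def by (simp add: pg[OF yU])
      also have "\<dots> = (\<Sum>k\<in>UNIV. p y k * (e \<bullet> grad (fs k) y))"
        unfolding inner_vec_def grad_def
        by (simp add: sum_distrib_left mult_ac) (rule sum.swap)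
      also have "\<dots> \<le> 0"
      proof (rule sum_nonpos)
        fix k
        have "e \<bullet> grad (fs k) y \<le> 0" using fs_H[of k] y e unfolding Hclass_def by blast
        then show "p y k * (e \<bullet> grad (fs k) y) \<le> 0" using pnn[of y k] by (simp add: mult_nonneg_nonpos)
      qed
      finally show "e \<bullet> grad g y \<le> 0" .
    qed
  qed
  have neg: "(\<lambda>x. - (- g x)) \<in> Hclass G d V" using gH by simp
  have ineg: "(\<integral>x. gen b \<sigma> (\<lambda>y. - g y) x \<partial>\<pi>) \<le> 0" by (rule \<pi>_inv[OF neg])
  have dg: "g differentiable_on U0" and ddg: "\<And>j. partial j g differentiable_on U0"
    using C2g unfolding C2_on_def by auto
  have "(\<integral>x. gen b \<sigma> (\<lambda>y. - g y) x \<partial>\<pi>) = (\<integral>x. - gen b \<sigma> g x \<partial>\<pi>)"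
  proof -
    have e: "gen b \<sigma> (\<lambda>y. - g y) x = - gen b \<sigma> g x" if "x \<in> space \<pi>" for x
      using that \<pi>_space U0G by (intro gen_neg[OF U0o _ dg ddg]) auto
    show ?thesis using Bochner_Integration.integral_cong[OF refl e, of "\<pi>"] by simp
  qed
  then have gen_pos: "(\<integral>x. gen b \<sigma> g x \<partial>\<pi>) \<ge> 0" using ineg by simp
  have clG: "closed (closure G)" by simp
  have int1: "integrable \<pi> (\<lambda>y. \<psi> (F y))"
  proof (rule integrable_cc[OF \<pi>_prob \<pi>_sets \<pi>_space clG _ Kall_c])
    show "continuous_on (closure G) (\<lambda>y. \<psi> (F y))"
      by (rule continuous_on_compose2[OF cpsi continuous_on_subset[OF cF U0G]]) auto
    show "\<psi> (F x) = c0" if "x \<in> closure G" "x \<notin> Kall" for x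
      using outK[OF that] unfolding F_def c0_def by (simp add: vec_eq_iff)
  qed
  have int2: "integrable \<pi> (gen b \<sigma> g)"
  proof (rule integrable_cc[OF \<pi>_prob \<pi>_sets \<pi>_space clG _ Kg_c])
    show "continuous_on (closure G) (gen b \<sigma> g)"
      by (rule continuous_on_subset[OF gen_cont[OF U0o C2g b_cont \<sigma>_cont] U0G])
    show "gen b \<sigma> g x = 0" if "x \<in> closure G" "x \<notin> closure {x \<in> closure G. g x \<noteq> c0}" for x
      by (rule gen_vanish[OF G_open U0o U0G C2g that])
  qed
  have genk0: "gen b \<sigma> (fs k) x = 0" if "x \<in> closure G" "x \<notin> Kall" for x k
  proof (rule gen_vanish[OF G_open U(1) U(2) U(3) that(1)])
    show "x \<notin> closure {y \<in> closure G. fs k y \<noteq> c k}" using that(2) unfolding Kall_def by blast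
  qed
  have int3: "integrable \<pi> (\<lambda>y. \<psi> (\<chi> i. fs i y - lam * gen b \<sigma> (fs i) y))"
  proof (rule integrable_cc[OF \<pi>_prob \<pi>_sets \<pi>_space clG _ Kall_c])
    have "continuous_on (closure G) (gen b \<sigma> (fs i))" for i
      by (rule continuous_on_subset[OF gen_cont[OF U(1) U(3) b_cont \<sigma>_cont] U(2)])
    moreover have "continuous_on (closure G) (fs i)" for i
      by (rule continuous_on_subset[OF cf U0G])
    ultimately have "continuous_on (closure G) (\<lambda>y. \<chi> i. fs i y - lam * gen b \<sigma> (fs i) y)"
      by (intro continuous_on_vec_lambda continuous_intros) auto
    then show "continuous_on (closure G) (\<lambda>y. \<psi> (\<chi> i. fs i y - lam * gen b \<sigma> (fs i) y))"
      by (rule continuous_on_compose2[OF cpsi]) auto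
    show "\<psi> (\<chi> i. fs i x - lam * gen b \<sigma> (fs i) x) = c0" if "x \<in> closure G" "x \<notin> Kall" for x
      using outK[OF that] genk0[OF that] unfolding c0_def by simp
  qed
  have int4: "integrable \<pi> (\<lambda>y. \<psi> (F y) - lam * gen b \<sigma> g y)"
    using int1 int2 by auto
  have "(\<integral>y. \<psi> (\<chi> i. fs i y - lam * gen b \<sigma> (fs i) y) \<partial>\<pi>) \<le> (\<integral>y. \<psi> (F y) - lam * gen b \<sigma> g y \<partial>\<pi>)"
    by (rule integral_mono[OF int3 int4]) (use pw \<pi>_space U0G in auto)
  also have "\<dots> = (\<integral>y. \<psi> (F y) \<partial>\<pi>) - lam * (\<integral>y. gen b \<sigma> g y \<partial>\<pi>)"
    using int1 int2 by simp
  also have "\<dots> \<le> (\<integral>y. \<psi> (F y) \<partial>\<pi>)" using gen_pos lam_pos by simp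
  finally show ?thesis unfolding F_def .
qed

end
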